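(* For each $n\geq2$, the pseudovariety $\llbracket N_n\rrbracket$ is join irreducible and $\operatorname{Excl}(N_n)=\llbracket x^{\omega+n-1}\approx x^{n-1}\rrbracket$.
   Context: $N_n=\langle a\mid a^n=0\rangle=\{0,a,\dots,a^{n-1}\}$ is the monogenic nilpotent semigroup of order $n$. A pseudovariety is a class of finite semigroups closed under finite direct products, subsemigroups and homomorphic images; $\llbracket S\rrbracket$ is the pseudovariety generated by $S$ and $\llbracket\Sigma\rrbracket$ the pseudovariety defined by pseudoidentities $\Sigma$; $x^\omega$ is the idempotent power and $x^{\omega+k}=x^\omega x^k$. A pseudovariety $\mathbf{V}$ is join irreducible if for every set $\mathscr{X}$ of pseudovarieties, $\mathbf{V}\subseteq\bigvee\mathscr{X}$ implies $\mathbf{V}\subseteq\mathbf{X}$ for some $\mathbf{X}\in\mathscr{X}$; $\operatorname{Excl}(S)$ is the class of finite semigroups $T$ with $S\notin\llbracket T\rrbracket$. *)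

theory Defs
  imports Main "HOL-Library.Nat_Bijection"
begin

text \<open>Finite semigroups are represented with carriers that are subsets of nat
(every finite semigroup is isomorphic to such one). Pseudovarieties are closed under homomorphic images,
hence under isomorphism, so this representation loses nothing.\<close>

type_synonym sgr = "nat set \<times> (nat \<Rightarrow> nat \<Rightarrow> nat)"

definition carr :: "sgr \<Rightarrow> nat set" where "carr S = fst S"
definition mul :: "sgr \<Rightarrow> nat \<Rightarrow> nat \<Rightarrow> nat" where "mul S = snd S"

definition fsg :: "sgr \<Rightarrow> bool" where
  "fsg S \<longleftrightarrow> finite (carr S) \<and> carr S \<noteq> {}
     \<and> (\<forall>x\<in>carr S. \<forall>y\<in>carr S. mul S x y \<in> carr S)
     \<and> (\<forall>x\<in>carr S. \<forall>y\<in>carr S. \<forall>z\<in>carr S. mul S (mul S x y) z = mul S x (mul S y z))"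

definition subsgr :: "sgr \<Rightarrow> sgr \<Rightarrow> bool" where
  "subsgr T S \<longleftrightarrow> fsg T \<and> carr T \<subseteq> carr S
     \<and> (\<forall>x\<in>carr T. \<forall>y\<in>carr T. mul T x y = mul S x y)"

definition hom_image :: "sgr \<Rightarrow> sgr \<Rightarrow> bool" where
  "hom_image T S \<longleftrightarrow> fsg T \<and> (\<exists>h. h ` carr S = carr T
     \<and> (\<forall>x\<in>carr S. \<forall>y\<in>carr S. h (mul S x y) = mul T (h x) (h y)))"

definition dprod :: "sgr \<Rightarrow> sgr \<Rightarrow> sgr" where
  "dprod S T = ((\<lambda>(a,b). prod_encode (a,b)) ` (carr S \<times> carr T),
     (\<lambda>p q. prod_encode (mul S (fst (prod_decode p)) (fst (prod_decode q)),
                         mul T (snd (prod_decode p)) (snd (prod_decode q)))))"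

text \<open>Trivial semigroup (empty direct product).\<close>
definition trivial_sgr :: sgr where "trivial_sgr = ({0}, \<lambda>_ _. 0)"

definition pseudovariety :: "sgr set \<Rightarrow> bool" where
  "pseudovariety V \<longleftrightarrow> V \<subseteq> {S. fsg S} \<and> trivial_sgr \<in> V
     \<and> (\<forall>S\<in>V. \<forall>T\<in>V. dprod S T \<in> V)
     \<and> (\<forall>S\<in>V. \<forall>T. subsgr T S \<longrightarrow> T \<in> V)
     \<and> (\<forall>S\<in>V. \<forall>T. hom_image T S \<longrightarrow> T \<in> V)"

definition gen_pv :: "sgr \<Rightarrow> sgr set" where
  "gen_pv S = \<Inter> {V. pseudovariety V \<and> S \<in> V}"

definition join_pv :: "sgr set set \<Rightarrow> sgr set" where
  "join_pv X = \<Inter> {V. pseudovariety V \<and> \<Union> X \<subseteq> V}"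

definition join_irreducible :: "sgr set \<Rightarrow> bool" where
  "join_irreducible V \<longleftrightarrow> (\<forall>X. (\<forall>W\<in>X. pseudovariety W) \<longrightarrow> V \<subseteq> join_pv X
      \<longrightarrow> (\<exists>W\<in>X. V \<subseteq> W))"

definition Excl :: "sgr \<Rightarrow> sgr set" where
  "Excl S = {T. fsg T \<and> S \<notin> gen_pv T}"

text \<open>Positive powers s^k (k \<ge> 1): spow S s k = s^(k+1).\<close>
primrec spow :: "sgr \<Rightarrow> nat \<Rightarrow> nat \<Rightarrow> nat" where
  "spow S s 0 = s"
| "spow S s (Suc k) = mul S (spow S s k) s"

definition pow :: "sgr \<Rightarrow> nat \<Rightarrow> nat \<Rightarrow> nat" where
  "pow S s k = spow S s (k - 1)"

definition omega_pow :: "sgr \<Rightarrow> nat \<Rightarrow> nat" where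
  "omega_pow S s = (THE e. mul S e e = e \<and> (\<exists>k\<ge>1. e = pow S s k))"

definition pv_omega_plus :: "nat \<Rightarrow> sgr set" where
  "pv_omega_plus m = {S. fsg S \<and>
     (\<forall>s\<in>carr S. mul S (omega_pow S s) (pow S s m) = pow S s m)}"

text \<open>N_n = <a | a^n = 0>: element 0 is the zero, element i (1 \<le> i < n) is a^i.\<close>
definition N :: "nat \<Rightarrow> sgr" where
  "N n = ({0..<n}, \<lambda>i j. if i = 0 \<or> j = 0 \<or> i + j \<ge> n then 0 else i + j)"

end

theory Submission
  imports Defs
begin

lemma spow_in: "fsg S \<Longrightarrow> s \<in> carr S \<Longrightarrow> spow S s k \<in> carr S"
  by (induction k) (auto simp: fsg_def)

lemma spow_add: assumes "fsg S" "s \<in> carr S"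
  shows "mul S (spow S s a) (spow S s b) = spow S s (a + b + 1)"
proof (induction b)
  case 0 then show ?case by simp
next
  case (Suc b)
  have "mul S (spow S s a) (spow S s (Suc b)) = mul S (mul S (spow S s a) (spow S s b)) s"
    using assms spow_in[OF assms] by (simp add: fsg_def)
  then show ?case using Suc by simp
qed

lemma spow_mult: assumes "fsg S" "s \<in> carr S"
  shows "spow S (spow S s a) b = spow S s ((a+1)*(b+1) - 1)"
proof (induction b)
  case 0 then show ?case by simp
next
  case (Suc b)
  have "spow S (spow S s a) (Suc b) = mul S (spow S s ((a+1)*(b+1) - 1)) (spow S s a)"
    using Suc by simp
  also have "\<dots> = spow S s ((a+1)*(b+1) - 1 + a + 1)" using spow_add[OF assms] by simp
  also have "(a+1)*(b+1) - 1 + a + 1 = (a+1)*(Suc b+1) - 1" by (simp add: algebra_simps)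
  finally show ?case .
qed

lemma spow_period1: assumes "spow S s (j+k) = spow S s j" "i \<ge> j"
  shows "spow S s (i+k) = spow S s i"
  using assms(2)
proof (induction i rule: dec_induct)
  case base then show ?case using assms(1) by simp
next
  case (step i) then show ?case by simp
qed

lemma spow_period: assumes "spow S s (j+k) = spow S s j" "i \<ge> j"
  shows "spow S s (i+t*k) = spow S s i"
proof (induction t)
  case 0 then show ?case by simp
next
  case (Suc t)
  have "spow S s (i + t*k + k) = spow S s (i+t*k)"
    using spow_period1[OF assms(1)] assms(2) by simp
  then show ?case using Suc by (simp add: algebra_simps)
qed

lemma idem_spow: assumes "fsg S" "e \<in> carr S" "mul S e e = e"
  shows "spow S e t = e"
  by (induction t) (use assms in simp_all)

lemma omega_exists: assumes "fsg S" "s \<in> carr S"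
  shows "\<exists>c. mul S (spow S s c) (spow S s c) = spow S s c"
proof -
  have "\<not> inj (spow S s)"
  proof
    assume "inj (spow S s)"
    then have "infinite (range (spow S s))" using finite_imageD by blast
    moreover have "range (spow S s) \<subseteq> carr S" using spow_in[OF assms] by auto
    ultimately show False using assms(1) finite_subset by (auto simp: fsg_def)
  qed
  then obtain a b where ab: "a < b" "spow S s a = spow S s b"
    unfolding inj_def by (metis linorder_neqE_nat)
  define p where "p = b - a"
  have p: "p \<ge> 1" "spow S s (a + p) = spow S s a" using ab by (auto simp: p_def)
  define c where "c = p*(a+1) - 1"
  have c1: "c + 1 = (a+1)*p" using p by (simp add: c_def algebra_simps)
  have "c \<ge> a" using p c1 by (metis add_le_cancel_right mult_le_mono1 mult_1 mult.commute)
  have "mul S (spow S s c) (spow S s c) = spow S s (c + c + 1)"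
    by (rule spow_add[OF assms])
  also have "spow S s (c + c + 1) = spow S s (c + (a+1)*p)" using c1 by (metis add.assoc)
  also have "\<dots> = spow S s c" using spow_period[OF p(2) \<open>c \<ge> a\<close>] .
  finally show ?thesis by blast
qed

lemma omega_unique: assumes "fsg S" "s \<in> carr S"
  "mul S (spow S s a) (spow S s a) = spow S s a"
  "mul S (spow S s b) (spow S s b) = spow S s b"
  shows "spow S s a = spow S s b"
proof -
  have "spow S s a = spow S (spow S s a) b"
    using idem_spow[OF assms(1) spow_in[OF assms(1,2)] assms(3)] by simp
  also have "\<dots> = spow S s ((a+1)*(b+1) - 1)" using spow_mult[OF assms(1,2)] .
  also have "\<dots> = spow S (spow S s b) a" using spow_mult[OF assms(1,2), of b a]
    by (simp add: algebra_simps)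
  also have "\<dots> = spow S s b"
    using idem_spow[OF assms(1) spow_in[OF assms(1,2)] assms(4)] by simp
  finally show ?thesis .
qed

lemma omega_char: assumes "fsg S" "s \<in> carr S" "mul S (spow S s c) (spow S s c) = spow S s c"
  shows "omega_pow S s = spow S s c"
  unfolding omega_pow_def
proof (rule the_equality)
  show "mul S (spow S s c) (spow S s c) = spow S s c \<and> (\<exists>k\<ge>1. spow S s c = pow S s k)"
    using assms(3) by (auto simp: pow_def intro!: exI[of _ "c+1"])
next
  fix e assume "mul S e e = e \<and> (\<exists>k\<ge>1. e = pow S s k)"
  then obtain k where "mul S e e = e" "e = spow S s (k-1)" by (auto simp: pow_def)
  then show "e = spow S s c" using omega_unique[OF assms(1,2) _ assms(3)] by blast
qed

lemma ident_iff: assumes "fsg S" "s \<in> carr S"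
  shows "mul S (omega_pow S s) (spow S s j) = spow S s j \<longleftrightarrow> (\<exists>k\<ge>1. spow S s (j+k) = spow S s j)"
proof -
  obtain c where c: "mul S (spow S s c) (spow S s c) = spow S s c" using omega_exists[OF assms] by blast
  have om: "omega_pow S s = spow S s c" using omega_char[OF assms c] .
  show ?thesis
  proof
    assume "mul S (omega_pow S s) (spow S s j) = spow S s j"
    then have "spow S s (j + (c+1)) = spow S s j" using om spow_add[OF assms] by (simp add: algebra_simps)
    then show "\<exists>k\<ge>1. spow S s (j+k) = spow S s j" by (intro exI[of _ "c+1"]) simp
  next
    assume "\<exists>k\<ge>1. spow S s (j+k) = spow S s j"
    then obtain k where k: "k \<ge> 1" "spow S s (j+k) = spow S s j" by blast
    have "spow S s c = spow S (spow S s c) (k-1)"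
      using idem_spow[OF assms(1) spow_in[OF assms] c] by simp
    also have "\<dots> = spow S s ((c+1)*k - 1)"
    proof -
      have kk: "k - 1 + 1 = k" using k(1) by simp
      show ?thesis using spow_mult[OF assms, of c "k-1", unfolded kk] .
    qed
    finally have e: "spow S s c = spow S s ((c+1)*k - 1)" .
    have "mul S (omega_pow S s) (spow S s j) = spow S s ((c+1)*k - 1 + j + 1)"
      using om e spow_add[OF assms] by simp
    also have "(c+1)*k - 1 + j + 1 = j + (c+1)*k" using k(1) by (simp add: algebra_simps)
    also have "spow S s (j + (c+1)*k) = spow S s j" using spow_period[OF k(2) order_refl] .
    finally show "mul S (omega_pow S s) (spow S s j) = spow S s j" .
  qed
qed

definition Q :: "nat \<Rightarrow> sgr set" where
  "Q j = {S. fsg S \<and> (\<forall>s\<in>carr S. \<exists>k\<ge>1. spow S s (j+k) = spow S s j)}"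

lemma pv_Q: "m \<ge> 1 \<Longrightarrow> pv_omega_plus m = Q (m-1)"
  unfolding pv_omega_plus_def Q_def pow_def using ident_iff by auto

lemma fsg_trivial: "fsg trivial_sgr"
  by (simp add: fsg_def trivial_sgr_def carr_def mul_def)

lemma spow_trivial: "spow trivial_sgr s (Suc k) = 0"
  by (simp add: trivial_sgr_def mul_def)

lemma dprod_carr: "carr (dprod S T) = (\<lambda>(a,b). prod_encode (a,b)) ` (carr S \<times> carr T)"
  by (simp add: dprod_def carr_def)

lemma dprod_mul: "mul (dprod S T) (prod_encode (a,b)) (prod_encode (c,d)) = prod_encode (mul S a c, mul T b d)"
  by (simp add: dprod_def mul_def prod_encode_inverse)

lemma spow_trivial0: "spow trivial_sgr 0 k = 0"
  by (cases k) (simp_all add: trivial_sgr_def mul_def)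

lemma carr_trivial: "carr trivial_sgr = {0}"
  by (simp add: trivial_sgr_def carr_def)

lemma fsg_dprod: assumes "fsg S" "fsg T" shows "fsg (dprod S T)"
proof -
  have "finite (carr (dprod S T))" using assms by (simp add: dprod_carr fsg_def)
  moreover have "carr (dprod S T) \<noteq> {}" using assms by (simp add: dprod_carr fsg_def)
  moreover have "\<forall>x\<in>carr (dprod S T). \<forall>y\<in>carr (dprod S T). mul (dprod S T) x y \<in> carr (dprod S T)"
    using assms by (auto simp: dprod_carr dprod_mul fsg_def)
  moreover have "\<forall>x\<in>carr (dprod S T). \<forall>y\<in>carr (dprod S T). \<forall>z\<in>carr (dprod S T).
     mul (dprod S T) (mul (dprod S T) x y) z = mul (dprod S T) x (mul (dprod S T) y z)"
    using assms by (auto simp: dprod_carr dprod_mul fsg_def)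
  ultimately show ?thesis by (simp add: fsg_def)
qed

lemma spow_dprod: "spow (dprod S T) (prod_encode (a,b)) k = prod_encode (spow S a k, spow T b k)"
  by (induction k) (simp_all add: dprod_mul)

lemma Q_mult: assumes "k \<ge> 1" "spow S s (j+k) = spow S s j" "t \<ge> 1"
  shows "spow S s (j + t*k) = spow S s j"
  using spow_period[OF assms(2) order_refl] by simp

lemma spow_sub: assumes "subsgr T S" "s \<in> carr T" shows "spow T s k = spow S s k"
proof (induction k)
  case 0 then show ?case by simp
next
  case (Suc k)
  have "spow T s k \<in> carr T" using spow_in assms by (auto simp: subsgr_def)
  then show ?case using Suc assms by (auto simp: subsgr_def)
qed

lemma spow_hom: assumes "fsg S" "s \<in> carr S"
  "\<forall>x\<in>carr S. \<forall>y\<in>carr S. h (mul S x y) = mul T (h x) (h y)"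
  shows "h (spow S s k) = spow T (h s) k"
proof (induction k)
  case 0 then show ?case by simp
next
  case (Suc k)
  then show ?case using assms spow_in[OF assms(1,2)] by simp
qed

lemma Q_pv: "pseudovariety (Q j)"
  unfolding pseudovariety_def
proof (intro conjI ballI allI impI)
  show "Q j \<subseteq> {S. fsg S}" by (auto simp: Q_def)
  show "trivial_sgr \<in> Q j"
    using fsg_trivial by (auto simp: Q_def carr_trivial spow_trivial0)
next
  fix S T assume S: "S \<in> Q j" and T: "T \<in> Q j"
  show "dprod S T \<in> Q j" unfolding Q_def
  proof (intro CollectI conjI ballI)
    show "fsg (dprod S T)" using S T fsg_dprod by (auto simp: Q_def)
    fix p assume "p \<in> carr (dprod S T)"
    then obtain a b where ab: "a \<in> carr S" "b \<in> carr T" "p = prod_encode (a,b)" by (auto simp: dprod_carr)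
    obtain k1 where k1: "k1 \<ge> 1" "spow S a (j+k1) = spow S a j" using S ab by (auto simp: Q_def)
    obtain k2 where k2: "k2 \<ge> 1" "spow T b (j+k2) = spow T b j" using T ab by (auto simp: Q_def)
    have "spow S a (j + k2*k1) = spow S a j" using Q_mult[OF k1 k2(1)] .
    moreover have "spow T b (j + k1*k2) = spow T b j" using Q_mult[OF k2 k1(1)] .
    ultimately have "spow (dprod S T) p (j + k1*k2) = spow (dprod S T) p j"
      by (simp add: ab spow_dprod mult.commute)
    moreover have "k1*k2 \<ge> 1" using k1 k2 by simp
    ultimately show "\<exists>k\<ge>1. spow (dprod S T) p (j+k) = spow (dprod S T) p j" by blast
  qed
next
  fix S T assume S: "S \<in> Q j" and T: "subsgr T S"
  show "T \<in> Q j" unfolding Q_def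
  proof (intro CollectI conjI ballI)
    show "fsg T" using T by (simp add: subsgr_def)
    fix s assume s: "s \<in> carr T"
    then have "s \<in> carr S" using T by (auto simp: subsgr_def)
    then show "\<exists>k\<ge>1. spow T s (j+k) = spow T s j"
      using S spow_sub[OF T s] by (auto simp: Q_def)
  qed
next
  fix S T assume S: "S \<in> Q j" and T: "hom_image T S"
  then obtain h where h: "h ` carr S = carr T"
    "\<forall>x\<in>carr S. \<forall>y\<in>carr S. h (mul S x y) = mul T (h x) (h y)" by (auto simp: hom_image_def)
  have fS: "fsg S" using S by (simp add: Q_def)
  show "T \<in> Q j" unfolding Q_def
  proof (intro CollectI conjI ballI)
    show "fsg T" using T by (simp add: hom_image_def)
    fix t assume "t \<in> carr T"
    then obtain s where s: "s \<in> carr S" "t = h s" using h(1) by auto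
    obtain k where k: "k \<ge> 1" "spow S s (j+k) = spow S s j" using S s by (auto simp: Q_def)
    then show "\<exists>k\<ge>1. spow T t (j+k) = spow T t j"
      using spow_hom[OF fS s(1) h(2)] s(2) by metis
  qed
qed

lemma fsg_N: "n \<ge> 2 \<Longrightarrow> fsg (N n)"
  unfolding fsg_def N_def carr_def mul_def by auto

lemma spow_N1: "n \<ge> 2 \<Longrightarrow> spow (N n) 1 i = (if i + 1 < n then i + 1 else 0)"
  by (induction i) (auto simp: N_def mul_def)

lemma N_notin: assumes "n \<ge> 2" shows "N n \<notin> Q (n-2)"
proof
  assume "N n \<in> Q (n-2)"
  moreover have "1 \<in> carr (N n)" using assms by (simp add: N_def carr_def)
  ultimately obtain k where k: "k \<ge> 1" "spow (N n) 1 (n-2+k) = spow (N n) 1 (n-2)"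
    unfolding Q_def by blast
  moreover have "spow (N n) 1 (n-2+k) = 0" using spow_N1[OF assms] assms k(1) by simp
  moreover have "Suc (n-2) = n - 1" using assms by arith
  moreover have "spow (N n) 1 (n-2) = n - 1" using spow_N1[OF assms] assms calculation(4) by simp
  ultimately show False using assms by simp
qed

lemma gen_pv_min: "pseudovariety V \<Longrightarrow> T \<in> V \<Longrightarrow> gen_pv T \<subseteq> V"
  by (auto simp: gen_pv_def)

lemma fail_gen: assumes n: "n \<ge> 2" and T: "fsg T" and s: "s \<in> carr T"
  and fail: "\<forall>k\<ge>1. spow T s (n-2+k) \<noteq> spow T s (n-2)"
  shows "N n \<in> gen_pv T"
proof -
  define j where "j = n - 2"
  have fail': "\<forall>k\<ge>1. spow T s (j+k) \<noteq> spow T s j" using fail j_def by simp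
  have distinct: "a = b" if "a \<le> j" "spow T s a = spow T s b" for a b
  proof (rule ccontr)
    assume "a \<noteq> b"
    have gen: False if "x < y" "x \<le> j" "spow T s x = spow T s y" for x y
    proof -
      have "spow T s (x + (y-x)) = spow T s x" using that by simp
      then have h1: "spow T s (j + (y-x)) = spow T s j" using spow_period1 that(2) by blast
      have "y - x \<ge> 1" using that(1) by simp
      then show False using fail' h1 by blast
    qed
    show False
    proof (cases "a < b")
      case True then show ?thesis using gen that by blast
    next
      case False then have "b < a" using \<open>a \<noteq> b\<close> by simp
      then show ?thesis using gen[of b a] that by simp
    qed
  qed
  define U :: sgr where "U = (range (spow T s), mul T)"
  have cU: "carr U = range (spow T s)" by (simp add: U_def carr_def)
  have mU: "mul U = mul T" by (simp add: U_def mul_def)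
  have subU: "subsgr U T"
    unfolding subsgr_def fsg_def
  proof (intro conjI)
    show "carr U \<subseteq> carr T" using cU spow_in[OF T s] by auto
    then show "finite (carr U)" using T finite_subset by (auto simp: fsg_def)
    show "carr U \<noteq> {}" using cU by simp
    show "\<forall>x\<in>carr U. \<forall>y\<in>carr U. mul U x y \<in> carr U"
      by (auto simp: cU mU spow_add[OF T s] simp del: spow.simps)
    show "\<forall>x\<in>carr U. \<forall>y\<in>carr U. \<forall>z\<in>carr U. mul U (mul U x y) z = mul U x (mul U y z)"
    proof (intro ballI)
      fix x y z assume "x \<in> carr U" "y \<in> carr U" "z \<in> carr U"
      then have "x \<in> carr T" "y \<in> carr T" "z \<in> carr T" using \<open>carr U \<subseteq> carr T\<close> by auto
      then show "mul U (mul U x y) z = mul U x (mul U y z)" using T mU unfolding fsg_def by simp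
    qed
    show "\<forall>x\<in>carr U. \<forall>y\<in>carr U. mul U x y = mul T x y" using mU by simp
  qed
  define h where "h x = (if \<exists>k. k \<le> j \<and> x = spow T s k then Suc (THE k. k \<le> j \<and> x = spow T s k) else 0)" for x
  have hv: "h (spow T s k) = (if k \<le> j then Suc k else 0)" for k
  proof (cases "k \<le> j")
    case True
    have "(THE k'. k' \<le> j \<and> spow T s k = spow T s k') = k"
      by (rule the_equality) (use True distinct in auto)
    then show ?thesis using True by (auto simp: h_def)
  next
    case False
    have "\<not> (\<exists>k'. k' \<le> j \<and> spow T s k = spow T s k')"
      using False distinct by (metis)
    then show ?thesis using False by (simp add: h_def)
  qed
  have himg: "h ` carr U = carr (N n)"
  proof
    show "h ` carr U \<subseteq> carr (N n)" using cU hv n by (auto simp: N_def carr_def j_def)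
    show "carr (N n) \<subseteq> h ` carr U"
    proof
      fix x assume "x \<in> carr (N n)"
      then have x: "x < n" by (simp add: N_def carr_def)
      show "x \<in> h ` carr U"
      proof (cases x)
        case 0
        have "h (spow T s (Suc j)) = 0" using hv[of "Suc j"] by (simp del: spow.simps)
        then show ?thesis using 0 cU by (metis rangeI image_eqI)
      next
        case (Suc k)
        then have "k \<le> j" using x n by (simp add: j_def)
        then have "h (spow T s k) = x" using hv Suc by simp
        then show ?thesis using cU by (metis rangeI image_eqI)
      qed
    qed
  qed
  have hhom: "\<forall>x\<in>carr U. \<forall>y\<in>carr U. h (mul U x y) = mul (N n) (h x) (h y)"
  proof (intro ballI)
    fix x y assume "x \<in> carr U" "y \<in> carr U"
    then obtain a b where ab: "x = spow T s a" "y = spow T s b" using cU by auto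
    have hm: "h (mul U x y) = (if a+b+1 \<le> j then Suc (a+b+1) else 0)"
      using ab mU spow_add[OF T s] hv[of "a+b+1"] by (simp del: spow.simps)
    have hx: "h x = (if a \<le> j then Suc a else 0)" "h y = (if b \<le> j then Suc b else 0)"
      using ab hv by (simp_all del: spow.simps)
    show "h (mul U x y) = mul (N n) (h x) (h y)"
      unfolding hm hx using n by (auto simp: N_def mul_def j_def)
  qed
  have "hom_image (N n) U" unfolding hom_image_def using fsg_N[OF n] himg hhom by blast
  show ?thesis unfolding gen_pv_def
  proof
    fix V assume "V \<in> {V. pseudovariety V \<and> T \<in> V}"
    then have V: "pseudovariety V" "T \<in> V" by auto
    then have "U \<in> V" using subU unfolding pseudovariety_def by blast
    then show "N n \<in> V" using V \<open>hom_image (N n) U\<close> unfolding pseudovariety_def by blast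
  qed
qed

lemma Excl_eq: assumes n: "n \<ge> 2" shows "Excl (N n) = Q (n-2)"
proof
  show "Excl (N n) \<subseteq> Q (n-2)"
  proof
    fix T assume "T \<in> Excl (N n)"
    then have T: "fsg T" "N n \<notin> gen_pv T" by (auto simp: Excl_def)
    show "T \<in> Q (n-2)" unfolding Q_def
    proof (intro CollectI conjI ballI)
      show "fsg T" using T by simp
      fix s assume s: "s \<in> carr T"
      show "\<exists>k\<ge>1. spow T s (n - 2 + k) = spow T s (n - 2)"
        using fail_gen[OF n T(1) s] T(2) by blast
    qed
  qed
  show "Q (n-2) \<subseteq> Excl (N n)"
  proof
    fix T assume T: "T \<in> Q (n-2)"
    have "gen_pv T \<subseteq> Q (n-2)" using gen_pv_min[OF Q_pv T] .
    then have "N n \<notin> gen_pv T" using N_notin[OF n] by blast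
    then show "T \<in> Excl (N n)" using T by (auto simp: Excl_def Q_def)
  qed
qed

theorem theorem5p7:
  fixes n :: nat
  assumes "n \<ge> 2"
  shows "join_irreducible (gen_pv (N n)) \<and> Excl (N n) = pv_omega_plus (n - 1)"
proof
  have E: "Excl (N n) = Q (n-2)" using Excl_eq[OF assms] .
  show "Excl (N n) = pv_omega_plus (n - 1)" using E pv_Q[of "n-1"] assms
    by (simp add: numeral_2_eq_2)
  show "join_irreducible (gen_pv (N n))" unfolding join_irreducible_def
  proof (intro allI impI)
    fix X assume X: "\<forall>W\<in>X. pseudovariety W" and sub: "gen_pv (N n) \<subseteq> join_pv X"
    show "\<exists>W\<in>X. gen_pv (N n) \<subseteq> W"
    proof (rule ccontr)
      assume "\<not> (\<exists>W\<in>X. gen_pv (N n) \<subseteq> W)"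
      then have nW: "\<forall>W\<in>X. N n \<notin> W" using gen_pv_min X by blast
      have "\<Union> X \<subseteq> Q (n-2)"
      proof
        fix T assume "T \<in> \<Union> X"
        then obtain W where W: "W \<in> X" "T \<in> W" by auto
        then have "fsg T" using X by (auto simp: pseudovariety_def)
        moreover have "N n \<notin> gen_pv T" using gen_pv_min[of W T] W X nW by blast
        ultimately show "T \<in> Q (n-2)" using E by (auto simp: Excl_def)
      qed
      then have "join_pv X \<subseteq> Q (n-2)" using Q_pv by (auto simp: join_pv_def)
      moreover have "N n \<in> gen_pv (N n)" by (simp add: gen_pv_def)
      ultimately show False using sub N_notin[OF assms] by blast
    qed
  qed
qed

end
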